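(* Let $t\ge 1$ and let $n_1,\dots,n_k$ be nonnegative integers. Then \[ \mathcal{L}^{(t)}\Big(\prod_{i=1}^{k} U^{(t)}_{n_i}(x)\Big) \] equals the number of noncrossing set partitions of the totally ordered set $[n_1]\sqcup[n_2]\sqcup\dots\sqcup[n_k]$ in which every block has size $t+1$ and no block is contained in a single $[n_i]$.
   Context: Fix an integer $t\ge1$. For $n\ge 0$ let $P_n$ be the path graph with vertices $1,\dots,n$ and edges $\{i,i+1\}$. A $t$-path in $P_n$ is a set of $t+1$ consecutive vertices $\{i,i+1,\dots,i+t\}$ (together with its $t$ edges). The Chebyshev polynomial of the second kind of order $t$ is $U^{(t)}_n(x)=\sum_{F}(-1)^{|F|}x^{\,n-(t+1)|F|}$, the sum over all families $F$ of pairwise vertex-disjoint $t$-paths in $P_n$ (so $U^{(t)}_0=1$; fixed points get weight $x$, $t$-paths weight $-1$). A set partition of a totally ordered set is noncrossing if there are no $a<b<c<d$ with $a,c$ in one block and $b,d$ in a different block. Let $\mu^{(t)}_m$ be the number of noncrossing set partitions of $[m]=\{1,\dots,m\}$ all of whose blocks have size $t+1$ (with $\mu^{(t)}_0=1$), and let $\mathcal{L}^{(t)}$ be the linear functional on polynomials with $\mathcal{L}^{(t)}(x^m)=\mu^{(t)}_m$. The disjoint union $[n_1]\sqcup\dots\sqcup[n_k]$ is totally ordered by listing $[n_1]$ first (in its natural order), then $[n_2]$, etc. *)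

theory Defs
  imports Main "HOL-Library.Disjoint_Sets" "HOL-Computational_Algebra.Polynomial"
begin

text \<open>t-paths in the path graph P_n on vertices 1..n: sets of t+1 consecutive vertices.\<close>
definition tpaths :: "nat \<Rightarrow> nat \<Rightarrow> nat set set" where
  "tpaths t n = {{i..i+t} | i. 1 \<le> i \<and> i + t \<le> n}"

text \<open>Chebyshev polynomial of the second kind of order t:
  sum over families of pairwise vertex-disjoint t-paths.\<close>
definition chebU :: "nat \<Rightarrow> nat \<Rightarrow> int poly" where
  "chebU t n = (\<Sum>F\<in>{F. F \<subseteq> tpaths t n \<and> disjoint F}.
                  monom ((-1) ^ card F) (n - (t+1) * card F))"

definition noncrossing :: "nat set set \<Rightarrow> bool" where
  "noncrossing P \<longleftrightarrow> (\<forall>B\<in>P. \<forall>C\<in>P. B \<noteq> C \<longrightarrow>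
      \<not> (\<exists>a b c d. a < b \<and> b < c \<and> c < d \<and> a \<in> B \<and> c \<in> B \<and> b \<in> C \<and> d \<in> C))"

definition NCpart :: "nat \<Rightarrow> nat set \<Rightarrow> nat set set set" where
  "NCpart t A = {P. partition_on A P \<and> noncrossing P \<and> (\<forall>B\<in>P. card B = t + 1)}"

definition mu :: "nat \<Rightarrow> nat \<Rightarrow> nat" where
  "mu t m = card (NCpart t {1..m})"

definition Lfun :: "nat \<Rightarrow> int poly \<Rightarrow> int" where
  "Lfun t p = (\<Sum>m\<le>degree p. coeff p m * int (mu t m))"

text \<open>The disjoint union [n_1] \<sqcup> ... \<sqcup> [n_k] is realised as {1..n_1+...+n_k}
  with the i-th summand (0-indexed) occupying the block seg ns i.\<close>
definition seg :: "nat list \<Rightarrow> nat \<Rightarrow> nat set" where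
  "seg ns i = {sum_list (take i ns) + 1 .. sum_list (take i ns) + ns ! i}"

end

theory Submission
  imports Defs
begin



lemma alt_sum_Pow:
  assumes "finite S"
  shows "(\<Sum>X\<in>Pow S. (-1::int)^card X) = (if S={} then 1 else 0)"
proof -
  have "(\<Prod>x\<in>S. (-1::int) + 1) = (\<Sum>X\<in>Pow S. (\<Prod>x\<in>X. (-1::int)) * (\<Prod>x\<in>S-X. 1))"
    by (rule prod_add[OF assms])
  moreover have "S \<noteq> {} \<Longrightarrow> card S \<noteq> 0" using assms by simp
  ultimately show ?thesis by (cases "S = {}") (auto simp: power_0_left)
qed

lemma Lfun_bound:
  assumes "degree p \<le> D"
  shows "Lfun t p = (\<Sum>m\<le>D. coeff p m * int (mu t m))"
  unfolding Lfun_def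
  by (rule sum.mono_neutral_left) (use assms in \<open>auto simp: coeff_eq_0\<close>)

lemma Lfun_add: "Lfun t (p+q) = Lfun t p + Lfun t q"
proof -
  let ?D = "max (degree p) (degree q)"
  have "Lfun t (p+q) = (\<Sum>m\<le>?D. coeff (p+q) m * int (mu t m))"
    by (rule Lfun_bound) (meson degree_add_le max.cobounded1 max.cobounded2)
  also have "\<dots> = (\<Sum>m\<le>?D. coeff p m * int (mu t m)) + (\<Sum>m\<le>?D. coeff q m * int (mu t m))"
    by (simp add: sum.distrib distrib_right)
  also have "\<dots> = Lfun t p + Lfun t q"
    by (simp add: Lfun_bound[symmetric])
  finally show ?thesis .
qed

lemma Lfun_monom: "Lfun t (monom c d) = c * int (mu t d)"
proof -
  have "Lfun t (monom c d) = (\<Sum>m\<le>d. coeff (monom c d) m * int (mu t m))"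
    by (rule Lfun_bound) (simp add: degree_monom_le)
  also have "\<dots> = c * int (mu t d)"
    by (simp add: coeff_monom if_distrib[of "\<lambda>x. x * _"] sum.delta cong: if_cong)
  finally show ?thesis .
qed

lemma Lfun_sum: "finite A \<Longrightarrow> Lfun t (\<Sum>a\<in>A. f a) = (\<Sum>a\<in>A. Lfun t (f a))"
  by (induction A rule: finite_induct) (simp_all add: Lfun_add, simp add: Lfun_def)




lemma NCpart_image:
  assumes sm: "strict_mono_on A (f::nat\<Rightarrow>nat)" and P: "P \<in> NCpart t A"
  shows "(image f) ` P \<in> NCpart t (f ` A)"
proof -
  have inj: "inj_on f A" using sm strict_mono_on_imp_inj_on by blast
  have pa: "partition_on A P" and nc: "noncrossing P" and cd: "\<forall>B\<in>P. card B = t+1"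
    using P by (auto simp: NCpart_def)
  have sub: "\<And>B. B \<in> P \<Longrightarrow> B \<subseteq> A" using pa by (auto simp: partition_on_def)
  have "partition_on (f ` A) ((image f) ` P)"
    unfolding partition_on_def
  proof (intro conjI)
    show "\<Union> ((`) f ` P) = f ` A" using pa by (auto simp: partition_on_def)
    show "disjoint ((`) f ` P)"
    proof (rule pairwiseI)
      fix X Y assume X: "X \<in> (`) f ` P" and Y: "Y \<in> (`) f ` P" and ne: "X \<noteq> Y"
      then obtain B C where B: "B \<in> P" and C: "C \<in> P" and XB: "X = f ` B" and YC: "Y = f ` C" by blast
      have "B \<noteq> C" using ne XB YC by auto
      hence BC: "B \<inter> C = {}" using pa B C by (auto simp: partition_on_def pairwise_def disjnt_def)
      show "disjnt X Y" unfolding disjnt_def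
      proof (rule ccontr)
        assume "X \<inter> Y \<noteq> {}"
        then obtain x where xb: "x \<in> f ` B" and xc: "x \<in> f ` C" using XB YC by blast
        obtain b c where bc: "b \<in> B" "c \<in> C" "f b = x" "f c = x" using xb xc by auto
        have "b \<in> A" "c \<in> A" using sub[OF B] sub[OF C] bc by auto
        hence "b = c" using inj_onD[OF inj, of b c] bc by simp
        thus False using BC bc by blast
      qed
    qed
    show "{} \<notin> (`) f ` P" using pa by (auto simp: partition_on_def)
  qed
  moreover have "noncrossing ((image f) ` P)"
    unfolding noncrossing_def
  proof (intro ballI impI notI)
    fix X Y assume X: "X \<in> (image f) ` P" and Y: "Y \<in> (image f) ` P" and ne: "X \<noteq> Y"
      and ex: "\<exists>a b c d. a < b \<and> b < c \<and> c < d \<and> a \<in> X \<and> c \<in> X \<and> b \<in> Y \<and> d \<in> Y"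
    obtain B C where B: "B \<in> P" and C: "C \<in> P" and XB: "X = f ` B" and YC: "Y = f ` C" using X Y by blast
    obtain a b c d where o: "a < b" "b < c" "c < d" and m: "a \<in> f ` B" "c \<in> f ` B" "b \<in> f ` C" "d \<in> f ` C"
      using ex XB YC by blast
    obtain a' c' b' d' where mm: "a' \<in> B" "c' \<in> B" "b' \<in> C" "d' \<in> C" "a = f a'" "b = f b'" "c = f c'" "d = f d'"
      using m by auto
    have AA: "a' \<in> A" "b' \<in> A" "c' \<in> A" "d' \<in> A" using mm sub B C by auto
    have lt: "a' < b'" "b' < c'" "c' < d'"
      using o unfolding mm(5-8)
      using strict_mono_on_less[OF sm AA(1) AA(2)] strict_mono_on_less[OF sm AA(2) AA(3)]
        strict_mono_on_less[OF sm AA(3) AA(4)] by simp_all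
    have BC: "B \<noteq> C" using ne XB YC by auto
    have "\<forall>B\<in>P. \<forall>C\<in>P. B \<noteq> C \<longrightarrow> \<not> (\<exists>a b c d. a < b \<and> b < c \<and> c < d \<and> a \<in> B \<and> c \<in> B \<and> b \<in> C \<and> d \<in> C)"
      using nc by (simp only: noncrossing_def)
    hence "B \<noteq> C \<longrightarrow> \<not> (\<exists>a b c d. a < b \<and> b < c \<and> c < d \<and> a \<in> B \<and> c \<in> B \<and> b \<in> C \<and> d \<in> C)"
      using B C by (meson)
    hence "\<not> (\<exists>a b c d. a < b \<and> b < c \<and> c < d \<and> a \<in> B \<and> c \<in> B \<and> b \<in> C \<and> d \<in> C)"
      using BC by (rule mp)
    thus False using lt mm(1-4) by blast
  qed
  moreover have "\<forall>B\<in>(image f) ` P. card B = t + 1"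
  proof
    fix X assume "X \<in> (image f) ` P"
    then obtain B where B: "B \<in> P" "X = f ` B" by blast
    have "inj_on f B" using inj sub[OF B(1)] inj_on_subset by blast
    thus "card X = t + 1" using B cd card_image by metis
  qed
  ultimately show ?thesis by (simp add: NCpart_def)
qed

lemma finite_NCpart: "finite A \<Longrightarrow> finite (NCpart t A)"
proof -
  assume "finite A"
  have "NCpart t A \<subseteq> Pow (Pow A)" by (auto simp: NCpart_def partition_on_def)
  thus ?thesis using \<open>finite A\<close> finite_subset by blast
qed

lemma card_NCpart_le:
  assumes sm: "strict_mono_on A (f::nat\<Rightarrow>nat)" and fin: "finite A"
  shows "card (NCpart t A) \<le> card (NCpart t (f ` A))"
proof (rule card_inj_on_le)
  have inj: "inj_on f A" using sm strict_mono_on_imp_inj_on by blast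
  have "inj_on (image f) (Pow A)" using inj inj_on_image_Pow by blast
  hence "inj_on (image (image f)) (Pow (Pow A))" using inj_on_image_Pow by blast
  moreover have "NCpart t A \<subseteq> Pow (Pow A)" by (auto simp: NCpart_def partition_on_def)
  ultimately show "inj_on (image (image f)) (NCpart t A)" using inj_on_subset by blast
  show "image (image f) ` NCpart t A \<subseteq> NCpart t (f ` A)" using NCpart_image[OF sm] by blast
  show "finite (NCpart t (f ` A))" using fin finite_NCpart by blast
qed

lemma strict_mono_on_inv:
  assumes sm: "strict_mono_on A (f::nat\<Rightarrow>nat)"
  shows "strict_mono_on (f ` A) (the_inv_into A f)"
proof (rule strict_mono_onI)
  have inj: "inj_on f A" using sm strict_mono_on_imp_inj_on by blast
  fix x y assume "x \<in> f ` A" "y \<in> f ` A" "x < y"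
  then obtain a b where ab: "a \<in> A" "b \<in> A" "x = f a" "y = f b" by auto
  hence "a < b" using strict_mono_on_less[OF sm] \<open>x < y\<close> by auto
  thus "the_inv_into A f x < the_inv_into A f y" using ab inj by (simp add: the_inv_into_f_f)
qed

lemma card_NCpart_eq:
  assumes sm: "strict_mono_on A (f::nat\<Rightarrow>nat)" and fin: "finite A"
  shows "card (NCpart t A) = card (NCpart t (f ` A))"
proof (rule antisym)
  show "card (NCpart t A) \<le> card (NCpart t (f ` A))" by (rule card_NCpart_le[OF sm fin])
  have inj: "inj_on f A" using sm strict_mono_on_imp_inj_on by blast
  have "the_inv_into A f ` (f ` A) = A" using inj by (simp add: the_inv_into_onto)
  hence "card (NCpart t (f ` A)) \<le> card (NCpart t (the_inv_into A f ` (f ` A)))"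
    using card_NCpart_le[OF strict_mono_on_inv[OF sm]] fin by simp
  thus "card (NCpart t (f ` A)) \<le> card (NCpart t A)"
    using \<open>the_inv_into A f ` (f ` A) = A\<close> by simp
qed

lemma card_NCpart_mu:
  assumes fin: "finite (A::nat set)"
  shows "card (NCpart t A) = mu t (card A)"
proof -
  define xs where "xs = sorted_list_of_set A"
  have sx: "sorted_wrt (<) xs" and setx: "set xs = A" and lx: "length xs = card A"
    using fin by (auto simp: xs_def)
  define f where "f i = xs ! (i - 1)" for i
  have sm: "strict_mono_on {1..card A} f"
  proof (rule strict_mono_onI)
    fix r s assume "r \<in> {1..card A}" "s \<in> {1..card A}" "r < s"
    hence "r - 1 < s - 1" "s - 1 < length xs" using lx by auto
    thus "f r < f s" using sx unfolding f_def
      by (simp add: sorted_wrt_nth_less)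
  qed
  have "f ` {1..card A} = A"
  proof
    show "f ` {1..card A} \<subseteq> A" using setx lx by (auto simp: f_def)
    show "A \<subseteq> f ` {1..card A}"
    proof
      fix x assume "x \<in> A"
      then obtain i where "i < length xs" "xs ! i = x" using setx by (metis in_set_conv_nth)
      hence "Suc i \<in> {1..card A}" "f (Suc i) = x" using lx by (auto simp: f_def)
      thus "x \<in> f ` {1..card A}" by blast
    qed
  qed
  thus ?thesis using card_NCpart_eq[OF sm] by (simp add: mu_def)
qed




definition ivl :: "nat set \<Rightarrow> bool" where
  "ivl B \<longleftrightarrow> (\<forall>x\<in>B. \<forall>z\<in>B. \<forall>y. x \<le> y \<and> y \<le> z \<longrightarrow> y \<in> B)"

lemma no_cross_ivl:
  assumes "X \<inter> Y = {}" "ivl X \<or> ivl Y"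
  shows "\<not> (\<exists>a b c d. a < b \<and> b < c \<and> c < d \<and> a \<in> X \<and> c \<in> X \<and> b \<in> Y \<and> d \<in> Y)"
proof
  assume "\<exists>a b c d. a < b \<and> b < c \<and> c < d \<and> a \<in> X \<and> c \<in> X \<and> b \<in> Y \<and> d \<in> Y"
  then obtain a b c d where o: "a < b" "b < c" "c < d" and m: "a \<in> X" "c \<in> X" "b \<in> Y" "d \<in> Y" by blast
  show False
  proof (cases "ivl X")
    case True
    hence "b \<in> X" using m o unfolding ivl_def by (meson less_imp_le)
    thus False using m assms(1) by blast
  next
    case False
    hence "ivl Y" using assms(2) by simp
    hence "c \<in> Y" using m o unfolding ivl_def by (meson less_imp_le)
    thus False using m assms(1) by blast
  qed
qed

lemma noncrossing_subset: "noncrossing P \<Longrightarrow> Q \<subseteq> P \<Longrightarrow> noncrossing Q"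
  unfolding noncrossing_def by (meson subsetD)

lemma NCpart_D:
  assumes "P \<in> NCpart t A"
  shows "\<Union>P = A" "disjoint P" "{} \<notin> P" "noncrossing P" "\<And>B. B \<in> P \<Longrightarrow> card B = t + 1"
  using assms by (auto simp: NCpart_def partition_on_def)

lemma disjointD': "disjoint P \<Longrightarrow> B \<in> P \<Longrightarrow> C \<in> P \<Longrightarrow> B \<noteq> C \<Longrightarrow> B \<inter> C = {}"
  unfolding pairwise_def disjnt_def by blast

lemma card_fix_blocks:
  assumes FA: "\<Union>F \<subseteq> A"
    and Fdisj: "disjoint F"
    and Fcard: "\<And>B. B \<in> F \<Longrightarrow> card B = t+1"
    and Fint: "\<And>B. B \<in> F \<Longrightarrow> ivl B"
  shows "card {P \<in> NCpart t A. F \<subseteq> P} = card (NCpart t (A - \<Union>F))"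
proof (rule bij_betw_same_card[of "\<lambda>P. P - F"], rule bij_betw_byWitness[where f'="\<lambda>Q. Q \<union> F"])
  have Fne: "{} \<notin> F" using Fcard by fastforce
  show "\<forall>P\<in>{P \<in> NCpart t A. F \<subseteq> P}. P - F \<union> F = P" by blast
  show "\<forall>Q\<in>NCpart t (A - \<Union> F). Q \<union> F - F = Q"
  proof
    fix Q assume Q: "Q \<in> NCpart t (A - \<Union> F)"
    have "Q \<inter> F = {}"
    proof (rule ccontr)
      assume "Q \<inter> F \<noteq> {}"
      then obtain B where B: "B \<in> Q" "B \<in> F" by blast
      have "B \<noteq> {}" using B(2) Fne by auto
      moreover have "B \<subseteq> A - \<Union>F" using NCpart_D(1)[OF Q] B(1) by blast
      ultimately show False using B(2) by blast
    qed
    thus "Q \<union> F - F = Q" by blast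
  qed
  show "(\<lambda>P. P - F) ` {P \<in> NCpart t A. F \<subseteq> P} \<subseteq> NCpart t (A - \<Union> F)"
  proof clarify
    fix P assume P: "P \<in> NCpart t A" and FP: "F \<subseteq> P"
    note D = NCpart_D[OF P]
    have U: "\<Union>(P - F) = A - \<Union>F"
    proof
      show "\<Union>(P - F) \<subseteq> A - \<Union>F"
      proof
        fix x assume "x \<in> \<Union>(P - F)"
        then obtain B where B: "B \<in> P" "B \<notin> F" "x \<in> B" by blast
        have "x \<notin> \<Union>F"
        proof
          assume "x \<in> \<Union>F"
          then obtain C where C: "C \<in> F" "x \<in> C" by blast
          have "C \<in> P" "C \<noteq> B" using C FP B by auto
          thus False using disjointD'[OF D(2) B(1) \<open>C \<in> P\<close>] B C by blast
        qed
        moreover have "x \<in> A" using D(1) B by blast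
        ultimately show "x \<in> A - \<Union>F" by blast
      qed
      show "A - \<Union>F \<subseteq> \<Union>(P - F)" using D(1) by blast
    qed
    have "partition_on (A - \<Union>F) (P - F)"
      unfolding partition_on_def using U D(2,3) pairwise_subset[of disjnt P "P - F"] by blast
    moreover have "noncrossing (P - F)" using noncrossing_subset[OF D(4)] by blast
    moreover have "\<forall>B\<in>P - F. card B = t + 1" using D(5) by blast
    ultimately show "P - F \<in> NCpart t (A - \<Union> F)" by (simp add: NCpart_def)
  qed
  show "(\<lambda>Q. Q \<union> F) ` NCpart t (A - \<Union> F) \<subseteq> {P \<in> NCpart t A. F \<subseteq> P}"
  proof clarify
    fix Q assume Q: "Q \<in> NCpart t (A - \<Union> F)"
    note D = NCpart_D[OF Q]
    have dis: "X \<inter> Y = {}" if X: "X \<in> Q \<union> F" and Y: "Y \<in> Q \<union> F" and ne: "X \<noteq> Y" for X Y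
    proof -
      consider "X \<in> Q" "Y \<in> Q" | "X \<in> F" "Y \<in> F" | "X \<in> Q" "Y \<in> F" | "X \<in> F" "Y \<in> Q"
        using X Y by blast
      thus ?thesis
      proof cases
        case 1 thus ?thesis using disjointD'[OF D(2)] ne by blast
      next
        case 2 thus ?thesis using disjointD'[OF Fdisj] ne by blast
      next
        case 3 thus ?thesis using D(1) by blast
      next
        case 4 thus ?thesis using D(1) by blast
      qed
    qed
    have "partition_on A (Q \<union> F)"
      unfolding partition_on_def
    proof (intro conjI)
      show "\<Union> (Q \<union> F) = A" using D(1) FA by blast
      show "disjoint (Q \<union> F)" unfolding pairwise_def disjnt_def using dis by blast
      show "{} \<notin> Q \<union> F" using D(3) Fne by blast
    qed
    moreover have "noncrossing (Q \<union> F)"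
      unfolding noncrossing_def
    proof (intro ballI impI)
      fix X Y assume X: "X \<in> Q \<union> F" and Y: "Y \<in> Q \<union> F" and ne: "X \<noteq> Y"
      show "\<not> (\<exists>a b c d. a < b \<and> b < c \<and> c < d \<and> a \<in> X \<and> c \<in> X \<and> b \<in> Y \<and> d \<in> Y)"
      proof (cases "X \<in> Q \<and> Y \<in> Q")
        case True
        have "\<forall>B\<in>Q. \<forall>C\<in>Q. B \<noteq> C \<longrightarrow> \<not> (\<exists>a b c d. a < b \<and> b < c \<and> c < d \<and> a \<in> B \<and> c \<in> B \<and> b \<in> C \<and> d \<in> C)"
          using D(4) by (simp only: noncrossing_def)
        thus ?thesis using True ne by meson
      next
        case False
        hence "ivl X \<or> ivl Y" using X Y Fint by blast
        thus ?thesis using no_cross_ivl dis[OF X Y ne] by blast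
      qed
    qed
    moreover have "\<forall>B\<in>Q \<union> F. card B = t + 1" using D(5) Fcard by blast
    ultimately show "Q \<union> F \<in> NCpart t A \<and> F \<subseteq> Q \<union> F" by (simp add: NCpart_def)
  qed
qed




lemma card_Suc_fin: "card B = t + 1 \<Longrightarrow> finite B"
  by (metis card.infinite add_is_0 one_neq_zero)
lemma card_Suc_ne: "card B = t + 1 \<Longrightarrow> B \<noteq> {}"
  by auto

lemma ivl_atLeastAtMost[simp]: "ivl {a..b}"
  unfolding ivl_def by auto

lemma exists_ivl_block:
  assumes P: "P \<in> NCpart t A" and A: "ivl A" and S: "ivl S" and B: "B \<in> P" "B \<subseteq> S"
  shows "\<exists>B'\<in>P. B' \<subseteq> S \<and> ivl B'"
  using B
proof (induction "Max B - Min B" arbitrary: B rule: less_induct)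
  case (less B)
  note D = NCpart_D[OF P]
  have finB: "finite B" and neB: "B \<noteq> {}" using D(5)[OF less.prems(1)] card_Suc_fin card_Suc_ne by blast+
  show ?case
  proof (cases "ivl B")
    case True thus ?thesis using less.prems by blast
  next
    case False
    then obtain x z y where xz: "x \<in> B" "z \<in> B" "x \<le> y" "y \<le> z" "y \<notin> B" unfolding ivl_def by blast
    have mB: "Min B \<in> B" "Max B \<in> B" using finB neB by auto
    have "Min B \<le> x" "z \<le> Max B" using Min_le[OF finB xz(1)] Max_ge[OF finB xz(2)] by auto
    moreover have "y \<noteq> Min B" "y \<noteq> Max B" using mB xz(5) by auto
    ultimately have lo: "Min B < y" and hi: "y < Max B" using xz(3,4) by linarith+
    have "Min B \<in> A" "Max B \<in> A" using mB D(1) less.prems(1) by blast+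
    hence "y \<in> A" using A lo hi unfolding ivl_def by (meson less_imp_le)
    then obtain C where C: "C \<in> P" "y \<in> C" using D(1) by blast
    have CB: "C \<noteq> B" using C xz by blast
    have BC: "B \<inter> C = {}" using disjointD'[OF D(2) less.prems(1) C(1)] CB by blast
    have NC: "\<forall>X\<in>P. \<forall>Y\<in>P. X \<noteq> Y \<longrightarrow> \<not> (\<exists>a b c d. a < b \<and> b < c \<and> c < d \<and> a \<in> X \<and> c \<in> X \<and> b \<in> Y \<and> d \<in> Y)"
      using D(4) by (simp only: noncrossing_def)
    have "B \<noteq> C \<longrightarrow> \<not> (\<exists>a b c d. a < b \<and> b < c \<and> c < d \<and> a \<in> B \<and> c \<in> B \<and> b \<in> C \<and> d \<in> C)"
      using NC less.prems(1) C(1) by meson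
    hence NC1: "\<not> (\<exists>a b c d. a < b \<and> b < c \<and> c < d \<and> a \<in> B \<and> c \<in> B \<and> b \<in> C \<and> d \<in> C)"
      using CB by auto
    have NC2: "\<not> (\<exists>a b c d. a < b \<and> b < c \<and> c < d \<and> a \<in> C \<and> c \<in> C \<and> b \<in> B \<and> d \<in> B)"
      using NC less.prems(1) C(1) CB by meson
    have inside: "Min B < d \<and> d < Max B" if d: "d \<in> C" for d
    proof -
      have "d \<noteq> Min B" "d \<noteq> Max B" using d mB BC by blast+
      moreover have "\<not> d < Min B"
      proof
        assume "d < Min B"
        hence "d < Min B \<and> Min B < y \<and> y < Max B \<and> d \<in> C \<and> y \<in> C \<and> Min B \<in> B \<and> Max B \<in> B"
          using lo hi d C mB by blast
        thus False using NC2 by blast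
      qed
      moreover have "\<not> Max B < d"
      proof
        assume "Max B < d"
        hence "Min B < y \<and> y < Max B \<and> Max B < d \<and> Min B \<in> B \<and> Max B \<in> B \<and> y \<in> C \<and> d \<in> C"
          using lo hi d C mB by blast
        thus False using NC1 by blast
      qed
      ultimately show ?thesis by linarith
    qed
    have finC: "finite C" and neC: "C \<noteq> {}" using D(5)[OF C(1)] card_Suc_fin card_Suc_ne by blast+
    have mC: "Min C \<in> C" "Max C \<in> C" using finC neC by auto
    have CS: "C \<subseteq> S"
    proof
      fix d assume "d \<in> C"
      hence "Min B \<le> d" "d \<le> Max B" using inside by (auto simp: less_imp_le)
      thus "d \<in> S" using S mB less.prems(2) unfolding ivl_def by blast
    qed
    have "Max C - Min C < Max B - Min B"
      using inside[OF mC(1)] inside[OF mC(2)] by linarith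
    thus ?thesis using less.hyps C(1) CS by blast
  qed
qed

lemma ivl_card_eq:
  assumes "ivl B" "card B = t + 1"
  shows "B = {Min B..Min B + t}"
proof -
  have fin: "finite B" and ne: "B \<noteq> {}" using assms(2) card_Suc_fin card_Suc_ne by blast+
  have Bf: "B = {Min B..Max B}"
  proof
    show "B \<subseteq> {Min B..Max B}" using fin by auto
    show "{Min B..Max B} \<subseteq> B"
    proof
      fix y assume "y \<in> {Min B..Max B}"
      hence "Min B \<le> y \<and> y \<le> Max B" by simp
      moreover have "Min B \<in> B" "Max B \<in> B" using fin ne by auto
      ultimately show "y \<in> B" using assms(1) unfolding ivl_def by blast
    qed
  qed
  have "card {Min B..Max B} = t + 1" using assms(2) Bf by simp
  hence "Suc (Max B) - Min B = t + 1" by simp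
  moreover have "Min B \<le> Max B" using fin ne by simp
  ultimately have eq: "Max B = Min B + t" by linarith
  show ?thesis unfolding eq[symmetric] by (rule Bf)
qed




definition Tp :: "nat \<Rightarrow> nat list \<Rightarrow> nat set set" where
  "Tp t ns = {B \<in> tpaths t (sum_list ns). \<exists>i<length ns. B \<subseteq> seg ns i}"

definition Fam :: "nat \<Rightarrow> nat list \<Rightarrow> nat set set set" where
  "Fam t ns = {F. F \<subseteq> Tp t ns \<and> disjoint F}"

definition Gfam :: "nat \<Rightarrow> nat \<Rightarrow> nat set set set" where
  "Gfam t n = {F. F \<subseteq> tpaths t n \<and> disjoint F}"

lemma tpaths_iff: "B \<in> tpaths t n \<longleftrightarrow> (\<exists>i. B = {i..i+t} \<and> 1 \<le> i \<and> i + t \<le> n)"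
  unfolding tpaths_def by blast

lemma tpaths_sub: "tpaths t n \<subseteq> Pow {1..n}"
  unfolding tpaths_def by auto

lemma finite_tpaths: "finite (tpaths t n)"
  by (rule finite_subset[OF tpaths_sub]) simp

lemma tpaths_elem: "B \<in> tpaths t n \<Longrightarrow> ivl B \<and> card B = t + 1 \<and> B \<subseteq> {1..n}"
  unfolding tpaths_def by auto

lemma card_family:
  assumes "\<Union>F \<subseteq> X" "finite X" "disjoint F" "\<And>B. B \<in> F \<Longrightarrow> card B = t + 1"
  shows "card (\<Union>F) = (t+1) * card F" "(t+1) * card F \<le> card X"
proof -
  have "\<And>B. B \<in> F \<Longrightarrow> finite B" using assms(1,2) by (meson Union_upper finite_subset subset_trans)
  hence "card (\<Union>F) = sum card F" using card_Union_disjoint assms(3) by blast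
  also have "\<dots> = (t+1) * card F" using assms(4) by simp
  finally show 1: "card (\<Union>F) = (t+1) * card F" .
  show "(t+1) * card F \<le> card X" unfolding 1[symmetric] using card_mono[OF assms(2,1)] .
qed

lemma sum_list_take_le: "i < length (ns::nat list) \<Longrightarrow> sum_list (take i ns) + ns ! i \<le> sum_list ns"
proof -
  assume i: "i < length ns"
  have "sum_list (take (Suc i) ns) = sum_list (take i ns) + ns ! i"
    using i by (simp add: take_Suc_conv_app_nth)
  moreover have "sum_list ns = sum_list (take (Suc i) ns) + sum_list (drop (Suc i) ns)"
    by (metis append_take_drop_id sum_list_append)
  ultimately show ?thesis by linarith
qed

lemma seg_sub: "i < length ns \<Longrightarrow> seg ns i \<subseteq> {1..sum_list ns}"
  unfolding seg_def using sum_list_take_le by fastforce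

lemma seg_snoc_lt: "i < length ns \<Longrightarrow> seg (ns @ [n]) i = seg ns i"
  unfolding seg_def by (simp add: nth_append)

lemma seg_snoc_last: "seg (ns @ [n]) (length ns) = {sum_list ns + 1 .. sum_list ns + n}"
  unfolding seg_def by simp

lemma Tp_sub: "B \<in> Tp t ns \<Longrightarrow> B \<subseteq> {1..sum_list ns}"
  unfolding Tp_def using tpaths_elem by blast

lemma Tp_elem: "B \<in> Tp t ns \<Longrightarrow> ivl B \<and> card B = t + 1 \<and> B \<subseteq> {1..sum_list ns}"
  unfolding Tp_def using tpaths_elem by blast

lemma Tp_nil: "Tp t [] = {}"
  unfolding Tp_def by simp

lemma Tp_snoc: "Tp t (ns @ [n]) = Tp t ns \<union> (image ((+) (sum_list ns))) ` tpaths t n"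
  (is "?L = ?R")
proof
  let ?S = "sum_list ns"
  show "?L \<subseteq> ?R"
  proof
    fix B assume B: "B \<in> ?L"
    then obtain j i where Bj: "B = {j..j+t}" "1 \<le> j" "j + t \<le> ?S + n" and i: "i < Suc (length ns)"
      and Bs: "B \<subseteq> seg (ns@[n]) i"
      unfolding Tp_def tpaths_iff by auto
    show "B \<in> ?R"
    proof (cases "i < length ns")
      case True
      hence "B \<subseteq> seg ns i" using Bs seg_snoc_lt by simp
      moreover have "j + t \<in> B" using Bj by simp
      ultimately have "j + t \<in> {1..?S}" using seg_sub[OF True] by blast
      hence "j + t \<le> ?S" by simp
      have "B \<subseteq> seg ns i" using Bs seg_snoc_lt True by simp
      moreover note \<open>j + t \<le> ?S\<close>
      ultimately have "B \<in> Tp t ns" unfolding Tp_def tpaths_iff using Bj True by blast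
      thus ?thesis by blast
    next
      case False
      hence "i = length ns" using i by simp
      hence "B \<subseteq> {?S+1..?S+n}" using Bs seg_snoc_last by simp
      hence j: "?S + 1 \<le> j" using Bj by auto
      define j' where "j' = j - ?S"
      have "{j'..j'+t} \<in> tpaths t n" unfolding tpaths_iff j'_def using j Bj by auto
      moreover have "B = (+) ?S ` {j'..j'+t}" using Bj j unfolding j'_def by auto
      ultimately show ?thesis by blast
    qed
  qed
  show "?R \<subseteq> ?L"
  proof
    fix B assume "B \<in> ?R"
    then consider "B \<in> Tp t ns" | B' where "B' \<in> tpaths t n" "B = (+) ?S ` B'" by blast
    thus "B \<in> ?L"
    proof cases
      case 1
      then obtain j i where Bj: "B = {j..j+t}" "1 \<le> j" "j + t \<le> ?S" and i: "i < length ns"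
        and Bs: "B \<subseteq> seg ns i"
        unfolding Tp_def tpaths_iff by auto
      have "B \<subseteq> seg (ns@[n]) i" using Bs seg_snoc_lt[OF i] by simp
      moreover have "i < length (ns@[n])" using i by simp
      ultimately show ?thesis unfolding Tp_def tpaths_iff using Bj by auto
    next
      case 2
      then obtain j where Bj: "B' = {j..j+t}" "1 \<le> j" "j + t \<le> n" unfolding tpaths_iff by blast
      have B: "B = {j + ?S..j + t + ?S}" using 2(2) Bj by simp
      have "B \<subseteq> seg (ns@[n]) (length ns)" unfolding seg_snoc_last B using Bj by auto
      moreover have "length ns < length (ns@[n])" by simp
      moreover have "B \<in> tpaths t (sum_list (ns@[n]))"
        unfolding tpaths_iff B using Bj by (intro exI[of _ "j + ?S"]) simp
      ultimately show ?thesis unfolding Tp_def by blast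
    qed
  qed
qed




lemma finite_Tp: "finite (Tp t ns)"
  unfolding Tp_def using finite_tpaths by simp

lemma Fam_bound: "F \<in> Fam t ns \<Longrightarrow> (t+1) * card F \<le> sum_list ns"
proof -
  assume F: "F \<in> Fam t ns"
  have "\<Union>F \<subseteq> {1..sum_list ns}" using F Tp_sub unfolding Fam_def by blast
  moreover have "\<And>B. B \<in> F \<Longrightarrow> card B = t + 1" using F Tp_elem unfolding Fam_def by blast
  ultimately show ?thesis using card_family(2)[of F "{1..sum_list ns}" t] F unfolding Fam_def by simp
qed

lemma Gfam_bound: "G \<in> Gfam t n \<Longrightarrow> (t+1) * card G \<le> n"
proof -
  assume G: "G \<in> Gfam t n"
  have "\<Union>G \<subseteq> {1..n}" using G tpaths_elem unfolding Gfam_def by blast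
  moreover have "\<And>B. B \<in> G \<Longrightarrow> card B = t + 1" using G tpaths_elem unfolding Gfam_def by blast
  ultimately show ?thesis using card_family(2)[of G "{1..n}" t] G unfolding Gfam_def by simp
qed

lemma Fam_snoc_bij:
  fixes ns :: "nat list"
  defines "S \<equiv> sum_list ns"
  shows "bij_betw (\<lambda>(F,G). F \<union> image ((+) S) ` G) (Fam t ns \<times> Gfam t n) (Fam t (ns @ [n]))"
    and "\<And>F G. F \<in> Fam t ns \<Longrightarrow> G \<in> Gfam t n \<Longrightarrow> card (F \<union> image ((+) S) ` G) = card F + card G"
proof -
  let ?sh = "image ((+) S)"
  have injsh: "inj ?sh" by (simp add: inj_image_eq_iff inj_def)
  have D1: "X \<inter> ?sh B' = {}" "X \<noteq> ?sh B'" if X: "X \<in> Tp t ns" and B': "B' \<in> tpaths t n" for X B'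
  proof -
    have "X \<subseteq> {1..S}" using Tp_sub[OF X] S_def by simp
    moreover have "?sh B' \<subseteq> {S+1..}" using tpaths_elem[OF B'] by auto
    ultimately have "X \<inter> ?sh B' \<subseteq> {1..S} \<inter> {S+1..}" by blast
    moreover have "{1..S} \<inter> {S+1..} = ({}::nat set)" by auto
    ultimately show "X \<inter> ?sh B' = {}" by blast
    moreover have "X \<noteq> {}" using Tp_elem[OF X] card_Suc_ne by blast
    ultimately show "X \<noteq> ?sh B'" by auto
  qed
  have shdis: "?sh B1 \<inter> ?sh B2 = {} \<longleftrightarrow> B1 \<inter> B2 = {}" for B1 B2
    by auto
  have TS: "Tp t (ns @ [n]) = Tp t ns \<union> ?sh ` tpaths t n" using Tp_snoc S_def by simp
  show "bij_betw (\<lambda>(F,G). F \<union> ?sh ` G) (Fam t ns \<times> Gfam t n) (Fam t (ns @ [n]))"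
  proof (rule bij_betw_byWitness[where f'="\<lambda>H. (H \<inter> Tp t ns, {B'\<in>tpaths t n. ?sh B' \<in> H})"])
    show "\<forall>p\<in>Fam t ns \<times> Gfam t n. (\<lambda>H. (H \<inter> Tp t ns, {B' \<in> tpaths t n. ?sh B' \<in> H})) ((\<lambda>(F, G). F \<union> ?sh ` G) p) = p"
    proof
      fix p assume p: "p \<in> Fam t ns \<times> Gfam t n"
      obtain F G where pFG: "p = (F,G)" by (cases p)
      have F: "F \<subseteq> Tp t ns" and G: "G \<subseteq> tpaths t n" using p pFG by (auto simp: Fam_def Gfam_def)
      have 1: "(F \<union> ?sh ` G) \<inter> Tp t ns = F" using F G D1(2) by blast
      have 2: "{B' \<in> tpaths t n. ?sh B' \<in> F \<union> ?sh ` G} = G"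
      proof
        show "{B' \<in> tpaths t n. ?sh B' \<in> F \<union> ?sh ` G} \<subseteq> G"
        proof clarify
          fix B' assume B': "B' \<in> tpaths t n" "?sh B' \<in> F \<union> ?sh ` G"
          have "?sh B' \<notin> F" using D1(2) F B'(1) by blast
          hence "?sh B' \<in> ?sh ` G" using B'(2) by blast
          thus "B' \<in> G" using injsh by (simp add: inj_image_mem_iff)
        qed
        show "G \<subseteq> {B' \<in> tpaths t n. ?sh B' \<in> F \<union> ?sh ` G}" using G by blast
      qed
      show "(\<lambda>H. (H \<inter> Tp t ns, {B' \<in> tpaths t n. ?sh B' \<in> H})) ((\<lambda>(F, G). F \<union> ?sh ` G) p) = p"
        unfolding pFG using 1 2 by simp
    qed
    show "\<forall>H\<in>Fam t (ns @ [n]). (\<lambda>(F, G). F \<union> ?sh ` G) ((\<lambda>H. (H \<inter> Tp t ns, {B' \<in> tpaths t n. ?sh B' \<in> H})) H) = H"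
    proof
      fix H assume "H \<in> Fam t (ns @ [n])"
      hence H: "H \<subseteq> Tp t ns \<union> ?sh ` tpaths t n" using TS by (simp add: Fam_def)
      show "(\<lambda>(F, G). F \<union> ?sh ` G) ((\<lambda>H. (H \<inter> Tp t ns, {B' \<in> tpaths t n. ?sh B' \<in> H})) H) = H"
        using H by auto
    qed
    show "(\<lambda>(F, G). F \<union> ?sh ` G) ` (Fam t ns \<times> Gfam t n) \<subseteq> Fam t (ns @ [n])"
    proof clarify
      fix F G assume "F \<in> Fam t ns" "G \<in> Gfam t n"
      hence F: "F \<subseteq> Tp t ns" "disjoint F" and G: "G \<subseteq> tpaths t n" "disjoint G"
        by (auto simp: Fam_def Gfam_def)
      have "F \<union> ?sh ` G \<subseteq> Tp t (ns @ [n])" using TS F G by blast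
      moreover have "disjoint (F \<union> ?sh ` G)"
      proof (rule pairwiseI)
        fix X Y assume X: "X \<in> F \<union> ?sh ` G" and Y: "Y \<in> F \<union> ?sh ` G" and ne: "X \<noteq> Y"
        show "disjnt X Y" unfolding disjnt_def
        proof -
          consider "X \<in> F" "Y \<in> F" | "X \<in> F" "Y \<in> ?sh ` G" | "X \<in> ?sh ` G" "Y \<in> F"
            | "X \<in> ?sh ` G" "Y \<in> ?sh ` G" using X Y by blast
          thus "X \<inter> Y = {}"
          proof cases
            case 1 thus ?thesis using disjointD'[OF F(2)] ne by blast
          next
            case 2 thus ?thesis using D1(1) F G by blast
          next
            case 3 thus ?thesis using D1(1) F G by blast
          next
            case 4
            then obtain B1 B2 where "B1 \<in> G" "B2 \<in> G" "X = ?sh B1" "Y = ?sh B2" by blast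
            moreover hence "B1 \<noteq> B2" using ne by blast
            ultimately show ?thesis using disjointD'[OF G(2)] shdis by metis
          qed
        qed
      qed
      ultimately show "F \<union> ?sh ` G \<in> Fam t (ns @ [n])" by (simp add: Fam_def)
    qed
    show "(\<lambda>H. (H \<inter> Tp t ns, {B' \<in> tpaths t n. ?sh B' \<in> H})) ` Fam t (ns @ [n]) \<subseteq> Fam t ns \<times> Gfam t n"
    proof clarify
      fix H assume "H \<in> Fam t (ns @ [n])"
      hence Hd: "disjoint H" by (simp add: Fam_def)
      have "H \<inter> Tp t ns \<in> Fam t ns"
        unfolding Fam_def using pairwise_subset[OF Hd] by blast
      moreover have "{B' \<in> tpaths t n. ?sh B' \<in> H} \<in> Gfam t n"
        unfolding Gfam_def
      proof (intro CollectI conjI)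
        show "{B' \<in> tpaths t n. ?sh B' \<in> H} \<subseteq> tpaths t n" by blast
        show "disjoint {B' \<in> tpaths t n. ?sh B' \<in> H}"
        proof (rule pairwiseI)
          fix B1 B2 assume "B1 \<in> {B' \<in> tpaths t n. ?sh B' \<in> H}" "B2 \<in> {B' \<in> tpaths t n. ?sh B' \<in> H}" "B1 \<noteq> B2"
          moreover hence "?sh B1 \<noteq> ?sh B2" using injsh by (meson injD)
          ultimately have "?sh B1 \<inter> ?sh B2 = {}" using disjointD'[OF Hd] by blast
          thus "disjnt B1 B2" using shdis[of B1 B2] by (simp add: disjnt_def)
        qed
      qed
      ultimately show "H \<inter> Tp t ns \<in> Fam t ns \<and> {B' \<in> tpaths t n. ?sh B' \<in> H} \<in> Gfam t n" by blast
    qed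
  qed
  fix F G assume F: "F \<in> Fam t ns" and G: "G \<in> Gfam t n"
  have "F \<subseteq> Tp t ns" using F by (simp add: Fam_def)
  hence finF: "finite F" using finite_Tp by (rule finite_subset)
  have "G \<subseteq> tpaths t n" using G by (simp add: Gfam_def)
  hence finG: "finite G" using finite_tpaths by (rule finite_subset)
  have "F \<inter> ?sh ` G = {}" using F G D1(2) unfolding Fam_def Gfam_def by blast
  hence "card (F \<union> ?sh ` G) = card F + card (?sh ` G)" using finF finG by (simp add: card_Un_disjoint)
  also have "card (?sh ` G) = card G" using injsh by (simp add: card_image inj_on_subset)
  finally show "card (F \<union> ?sh ` G) = card F + card G" .
qed




lemma chebU_Gfam: "chebU t n = (\<Sum>G\<in>Gfam t n. monom ((-1) ^ card G) (n - (t+1) * card G))"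
  unfolding chebU_def Gfam_def by simp

lemma prod_expand:
  "(\<Prod>i<length ns. chebU t (ns ! i)) =
     (\<Sum>F\<in>Fam t ns. monom ((-1) ^ card F) (sum_list ns - (t+1) * card F))"
proof (induction ns rule: rev_induct)
  case Nil
  have "Fam t [] = {{}}" unfolding Fam_def Tp_nil by auto
  thus ?case by simp
next
  case (snoc n ns)
  let ?S = "sum_list ns"
  let ?phi = "\<lambda>(F,G). F \<union> image ((+) ?S) ` G"
  let ?h = "\<lambda>H. monom ((-1::int) ^ card H) (sum_list (ns @ [n]) - (t+1) * card H)"
  have "(\<Prod>i<length (ns @ [n]). chebU t ((ns @ [n]) ! i))
        = (\<Prod>i<length ns. chebU t ((ns @ [n]) ! i)) * chebU t n"
    by (simp add: nth_append)
  also have "(\<Prod>i<length ns. chebU t ((ns @ [n]) ! i)) = (\<Prod>i<length ns. chebU t (ns ! i))"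
    by (rule prod.cong) (auto simp: nth_append)
  also have "\<dots> * chebU t n =
      (\<Sum>F\<in>Fam t ns. monom ((-1) ^ card F) (?S - (t+1) * card F)) *
      (\<Sum>G\<in>Gfam t n. monom ((-1) ^ card G) (n - (t+1) * card G))"
    using snoc by (simp only: chebU_Gfam[of t n])
  also have "\<dots> = (\<Sum>p\<in>Fam t ns \<times> Gfam t n.
      monom ((-1) ^ card (fst p)) (?S - (t+1) * card (fst p)) *
      monom ((-1) ^ card (snd p)) (n - (t+1) * card (snd p)))"
    by (simp add: sum_product sum.cartesian_product case_prod_beta)
  also have "\<dots> = (\<Sum>p\<in>Fam t ns \<times> Gfam t n. ?h (?phi p))"
  proof (rule sum.cong[OF refl])
    fix p assume p: "p \<in> Fam t ns \<times> Gfam t n"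
    obtain F G where pFG: "p = (F,G)" by (cases p)
    have F: "F \<in> Fam t ns" and G: "G \<in> Gfam t n" using p pFG by auto
    have c: "card (?phi p) = card F + card G" using Fam_snoc_bij(2)[OF F G] pFG by simp
    have b1: "(t+1) * card F \<le> ?S" using Fam_bound[OF F] .
    have b2: "(t+1) * card G \<le> n" using Gfam_bound[OF G] .
    have e: "?S - (t+1) * card F + (n - (t+1) * card G) = sum_list (ns @ [n]) - (t+1) * (card F + card G)"
      using b1 b2 by (simp add: algebra_simps)
    show "monom ((-1) ^ card (fst p)) (?S - (t+1) * card (fst p)) *
      monom ((-1) ^ card (snd p)) (n - (t+1) * card (snd p)) = ?h (?phi p)"
      unfolding c unfolding pFG fst_conv snd_conv mult_monom e by (simp add: power_add)
  qed
  also have "\<dots> = (\<Sum>H\<in>Fam t (ns @ [n]). ?h H)"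
    by (rule sum.reindex_bij_betw[OF Fam_snoc_bij(1)])
  finally show ?case .
qed




lemma char_seg:
  assumes P: "P \<in> NCpart t {1..sum_list ns}"
  shows "(\<forall>B\<in>P. \<forall>i<length ns. \<not> B \<subseteq> seg ns i) \<longleftrightarrow> P \<inter> Tp t ns = {}"
proof
  assume "\<forall>B\<in>P. \<forall>i<length ns. \<not> B \<subseteq> seg ns i"
  thus "P \<inter> Tp t ns = {}" unfolding Tp_def by blast
next
  assume E: "P \<inter> Tp t ns = {}"
  show "\<forall>B\<in>P. \<forall>i<length ns. \<not> B \<subseteq> seg ns i"
  proof (intro ballI allI impI notI)
    fix B i assume B: "B \<in> P" and i: "i < length ns" and Bs: "B \<subseteq> seg ns i"
    have "ivl (seg ns i)" unfolding seg_def by simp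
    then obtain B' where B': "B' \<in> P" "B' \<subseteq> seg ns i" "ivl B'"
      using exists_ivl_block[OF P _ _ B Bs] by auto
    note D = NCpart_D[OF P]
    have cB': "card B' = t + 1" using D(5)[OF B'(1)] .
    have eq: "B' = {Min B'..Min B' + t}" using ivl_card_eq[OF B'(3) cB'] .
    have sub: "B' \<subseteq> {1..sum_list ns}" using D(1) B'(1) by blast
    have "Min B' \<in> B'" "Min B' + t \<in> B'" by (subst eq, simp)+
    hence "1 \<le> Min B'" "Min B' + t \<le> sum_list ns" using sub by auto
    hence "B' \<in> tpaths t (sum_list ns)" unfolding tpaths_iff using eq by blast
    hence "B' \<in> Tp t ns" unfolding Tp_def using B'(2) i by blast
    thus False using E B'(1) by blast
  qed
qed

lemma mu_count:
  assumes F: "F \<in> Fam t ns"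
  shows "mu t (sum_list ns - (t+1) * card F) = card {P \<in> NCpart t {1..sum_list ns}. F \<subseteq> P}"
proof -
  let ?N = "sum_list ns"
  have FT: "F \<subseteq> Tp t ns" and Fd: "disjoint F" using F by (auto simp: Fam_def)
  have FA: "\<Union>F \<subseteq> {1..?N}" using FT Tp_sub by blast
  have Fc: "\<And>B. B \<in> F \<Longrightarrow> card B = t + 1" using FT Tp_elem by blast
  have Fi: "\<And>B. B \<in> F \<Longrightarrow> ivl B" using FT Tp_elem by blast
  have "card {P \<in> NCpart t {1..?N}. F \<subseteq> P} = card (NCpart t ({1..?N} - \<Union>F))"
    by (rule card_fix_blocks[OF FA Fd Fc Fi])
  also have "\<dots> = mu t (card ({1..?N} - \<Union>F))"
    by (rule card_NCpart_mu) simp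
  also have "card ({1..?N} - \<Union>F) = ?N - (t+1) * card F"
  proof -
    have "finite (\<Union>F)" using FA finite_subset by blast
    hence "card ({1..?N} - \<Union>F) = card {1..?N} - card (\<Union>F)" using FA by (rule card_Diff_subset)
    also have "card (\<Union>F) = (t+1) * card F" using card_family(1)[OF FA _ Fd Fc] by simp
    finally show ?thesis by simp
  qed
  finally show ?thesis by simp
qed

lemma finite_Fam: "finite (Fam t ns)"
proof -
  have "Fam t ns \<subseteq> Pow (Tp t ns)" by (auto simp: Fam_def)
  thus ?thesis using finite_Tp by (meson finite_Pow_iff finite_subset)
qed

theorem mainTheorem1:
  fixes t :: nat and ns :: "nat list"
  assumes "t \<ge> 1"
  shows "Lfun t (\<Prod>i<length ns. chebU t (ns ! i)) =
    int (card {P \<in> NCpart t {1..sum_list ns}.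
                \<forall>B\<in>P. \<forall>i<length ns. \<not> B \<subseteq> seg ns i})"
proof -
  let ?N = "sum_list ns"
  let ?NC = "NCpart t {1..?N}"
  let ?T = "Tp t ns"
  have finNC: "finite ?NC" by (rule finite_NCpart) simp
  have "Lfun t (\<Prod>i<length ns. chebU t (ns ! i))
      = (\<Sum>F\<in>Fam t ns. (-1) ^ card F * int (mu t (?N - (t+1) * card F)))"
    unfolding prod_expand by (simp add: Lfun_sum[OF finite_Fam] Lfun_monom)
  also have "\<dots> = (\<Sum>F\<in>Fam t ns. (-1) ^ card F * int (card {P \<in> ?NC. F \<subseteq> P}))"
  proof (rule sum.cong[OF refl])
    fix F assume "F \<in> Fam t ns"
    from mu_count[OF this] show "(-1) ^ card F * int (mu t (?N - (t+1) * card F)) = (-1) ^ card F * int (card {P \<in> ?NC. F \<subseteq> P})"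
      by (simp only:)
  qed
  also have "\<dots> = (\<Sum>F\<in>Fam t ns. \<Sum>P\<in>?NC. if F \<subseteq> P then (-1) ^ card F else 0)"
  proof (rule sum.cong[OF refl])
    fix F
    have "int (card {P \<in> ?NC. F \<subseteq> P}) = (\<Sum>P\<in>{P \<in> ?NC. F \<subseteq> P}. 1)" by simp
    also have "\<dots> = (\<Sum>P\<in>?NC. if F \<subseteq> P then 1 else 0)"
      by (rule sum.inter_filter[OF finNC])
    finally show "(-1) ^ card F * int (card {P \<in> ?NC. F \<subseteq> P}) = (\<Sum>P\<in>?NC. if F \<subseteq> P then (-1::int) ^ card F else 0)"
      by (simp add: sum_distrib_left if_distrib cong: if_cong)
  qed
  also have "\<dots> = (\<Sum>P\<in>?NC. \<Sum>F\<in>Fam t ns. if F \<subseteq> P then (-1) ^ card F else 0)"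
    by (rule sum.swap)
  also have "\<dots> = (\<Sum>P\<in>?NC. if P \<inter> ?T = {} then 1 else 0)"
  proof (rule sum.cong[OF refl])
    fix P assume P: "P \<in> ?NC"
    have "(\<Sum>F\<in>Fam t ns. if F \<subseteq> P then (-1::int) ^ card F else 0) = (\<Sum>F\<in>{F \<in> Fam t ns. F \<subseteq> P}. (-1) ^ card F)"
      by (rule sum.inter_filter[OF finite_Fam, symmetric])
    also have "{F \<in> Fam t ns. F \<subseteq> P} = Pow (P \<inter> ?T)"
    proof
      show "{F \<in> Fam t ns. F \<subseteq> P} \<subseteq> Pow (P \<inter> ?T)" by (auto simp: Fam_def)
      have "disjoint P" using NCpart_D(2)[OF P] .
      thus "Pow (P \<inter> ?T) \<subseteq> {F \<in> Fam t ns. F \<subseteq> P}"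
        unfolding Fam_def using pairwise_subset by fastforce
    qed
    also have "(\<Sum>F\<in>Pow (P \<inter> ?T). (-1::int) ^ card F) = (if P \<inter> ?T = {} then 1 else 0)"
      by (rule alt_sum_Pow) (simp add: finite_Tp)
    finally show "(\<Sum>F\<in>Fam t ns. if F \<subseteq> P then (-1::int) ^ card F else 0) = (if P \<inter> ?T = {} then 1 else 0)" .
  qed
  also have "\<dots> = int (card {P \<in> ?NC. P \<inter> ?T = {}})"
  proof -
    have "int (card {P \<in> ?NC. P \<inter> ?T = {}}) = (\<Sum>P\<in>{P \<in> ?NC. P \<inter> ?T = {}}. 1)" by simp
    also have "\<dots> = (\<Sum>P\<in>?NC. if P \<inter> ?T = {} then 1 else 0)"
      by (rule sum.inter_filter[OF finNC])
    finally show ?thesis by simp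
  qed
  also have "{P \<in> ?NC. P \<inter> ?T = {}} = {P \<in> ?NC. \<forall>B\<in>P. \<forall>i<length ns. \<not> B \<subseteq> seg ns i}"
    using char_seg by blast
  finally show ?thesis .
qed


end
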